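(* In the setting of the Adapted Realisation theorem in the exceptional case $F_n=A_1*A_2$ with $A_1,A_2$ non-trivial (so that $\widetilde\iota_1(\widetilde X_1)\cap\widetilde\iota_2(\widetilde X_2)$ is a single point), the projection of this intersection point to $X$ is fixed by the action of $H$ on $X$.
   Context: Setting: $H$ finite, $\phi\colon H\to\mathrm{Out}(F_n)$, $F_n=A_1*A_2$ with $\phi(H)$ preserving the conjugacy classes of $A_1$ and $A_2$; $X_i$ are marked metric graphs realising the induced actions $H\to\mathrm{Out}(A_i)$; $X$ is a marked metric graph on which $H$ acts by combinatorial isometries realising $\phi$, with $H$-invariant isometric embeddings $\iota_i\colon X_i\to X$ respecting markings via lifts $\widetilde\iota_i\colon\widetilde X_i\to\widetilde X$ (equivariant for $A_i\hookrightarrow F_n$), $X=\iota_1(X_1)\cup\iota_2(X_2)$, and $\widetilde\iota_1(\widetilde X_1)\cap\widetilde\iota_2(\widetilde X_2)$ a single point. A space is marked by a group $A$ if an isomorphism of $A$ with the deck group of its universal cover is fixed; realising means the induced action on conjugacy classes of $\pi_1$ agrees with the given outer action. *)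

theory Defs
  imports "HOL-Algebra.Algebra"
begin

definition word_val :: "('g, 'b) monoid_scheme \<Rightarrow> ('g \<times> bool) list \<Rightarrow> 'g" where
  "word_val G ws = foldr (\<lambda>(b, s) acc. (if s then b else inv\<^bsub>G\<^esub> b) \<otimes>\<^bsub>G\<^esub> acc) ws \<one>\<^bsub>G\<^esub>"

definition reduced_word :: "('g \<times> bool) list \<Rightarrow> bool" where
  "reduced_word ws \<longleftrightarrow>
     (\<forall>i. Suc i < length ws \<longrightarrow> \<not> (fst (ws ! i) = fst (ws ! Suc i) \<and> snd (ws ! i) \<noteq> snd (ws ! Suc i)))"

definition free_of_rank :: "('g, 'b) monoid_scheme \<Rightarrow> nat \<Rightarrow> bool" where
  "free_of_rank G n \<longleftrightarrow> group G \<and>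
     (\<exists>B. B \<subseteq> carrier G \<and> finite B \<and> card B = n \<and> generate G B = carrier G \<and>
        (\<forall>ws. ws \<noteq> [] \<and> fst ` set ws \<subseteq> B \<and> reduced_word ws \<longrightarrow> word_val G ws \<noteq> \<one>\<^bsub>G\<^esub>))"

definition internal_free_product :: "('g, 'b) monoid_scheme \<Rightarrow> 'g set \<Rightarrow> 'g set \<Rightarrow> bool" where
  "internal_free_product G A B \<longleftrightarrow> group G \<and> subgroup A G \<and> subgroup B G \<and>
     generate G (A \<union> B) = carrier G \<and>
     (\<forall>ws c. ws \<noteq> [] \<and> (\<forall>i < length ws. ws ! i \<in> (if even i = c then A else B) - {\<one>\<^bsub>G\<^esub>})
        \<longrightarrow> foldr (\<otimes>\<^bsub>G\<^esub>) ws \<one>\<^bsub>G\<^esub> \<noteq> \<one>\<^bsub>G\<^esub>)"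

text \<open>Outer automorphism classes, represented as cosets of Inn(K) in Aut(K).\<close>
definition out_class :: "('g, 'b) monoid_scheme \<Rightarrow> ('g \<Rightarrow> 'g) \<Rightarrow> ('g \<Rightarrow> 'g) set" where
  "out_class K \<alpha> = {\<beta> \<in> iso K K. \<exists>c \<in> carrier K. \<forall>x \<in> carrier K.
       \<beta> x = c \<otimes>\<^bsub>K\<^esub> \<alpha> x \<otimes>\<^bsub>K\<^esub> inv\<^bsub>K\<^esub> c}"

definition Out_group :: "('g, 'b) monoid_scheme \<Rightarrow> ('g \<Rightarrow> 'g) set monoid" where
  "Out_group K = \<lparr> carrier = {out_class K \<alpha> | \<alpha>. \<alpha> \<in> iso K K},
     monoid.mult = (\<lambda>P Q. {\<beta> \<in> iso K K. \<exists>\<alpha> \<in> P. \<exists>\<alpha>' \<in> Q. \<forall>x \<in> carrier K. \<beta> x = \<alpha> (\<alpha>' x)}),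
     one = out_class K (\<lambda>x. x) \<rparr>"

text \<open>Induced outer action on a subgroup A whose conjugacy class is preserved:
  restrict a representative automorphism mapping A onto A.\<close>
definition induced_out :: "('g, 'b) monoid_scheme \<Rightarrow> 'g set \<Rightarrow> ('h \<Rightarrow> ('g \<Rightarrow> 'g) set) \<Rightarrow> 'h \<Rightarrow> ('g \<Rightarrow> 'g) set" where
  "induced_out G A \<phi> h = (\<Union>\<alpha> \<in> {\<alpha> \<in> \<phi> h. \<alpha> ` A = A}. out_class (G\<lparr>carrier := A\<rparr>) \<alpha>)"

definition metric_on :: "'p set \<Rightarrow> ('p \<Rightarrow> 'p \<Rightarrow> real) \<Rightarrow> bool" where
  "metric_on T d \<longleftrightarrow>
     (\<forall>x\<in>T. \<forall>y\<in>T. 0 \<le> d x y \<and> (d x y = 0 \<longleftrightarrow> x = y) \<and> d x y = d y x) \<and>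
     (\<forall>x\<in>T. \<forall>y\<in>T. \<forall>z\<in>T. d x z \<le> d x y + d y z)"

definition isometric_embedding :: "'a set \<Rightarrow> ('a \<Rightarrow> 'a \<Rightarrow> real) \<Rightarrow> 'p set \<Rightarrow> ('p \<Rightarrow> 'p \<Rightarrow> real) \<Rightarrow> ('a \<Rightarrow> 'p) \<Rightarrow> bool" where
  "isometric_embedding S e T d f \<longleftrightarrow> f ` S \<subseteq> T \<and> (\<forall>x\<in>S. \<forall>y\<in>S. d (f x) (f y) = e x y)"

definition geodesic_space :: "'p set \<Rightarrow> ('p \<Rightarrow> 'p \<Rightarrow> real) \<Rightarrow> bool" where
  "geodesic_space T d \<longleftrightarrow> (\<forall>x\<in>T. \<forall>y\<in>T. \<exists>\<gamma>.
      isometric_embedding {0..d x y} (\<lambda>s t. \<bar>s - t\<bar>) T d \<gamma> \<and> \<gamma> 0 = x \<and> \<gamma> (d x y) = y)"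

definition gromov_product :: "('p \<Rightarrow> 'p \<Rightarrow> real) \<Rightarrow> 'p \<Rightarrow> 'p \<Rightarrow> 'p \<Rightarrow> real" where
  "gromov_product d w x y = (d w x + d w y - d x y) / 2"

definition zero_hyperbolic :: "'p set \<Rightarrow> ('p \<Rightarrow> 'p \<Rightarrow> real) \<Rightarrow> bool" where
  "zero_hyperbolic T d \<longleftrightarrow> (\<forall>w\<in>T. \<forall>x\<in>T. \<forall>y\<in>T. \<forall>z\<in>T.
      min (gromov_product d w x y) (gromov_product d w y z) \<le> gromov_product d w x z)"

definition R_tree :: "'p set \<Rightarrow> ('p \<Rightarrow> 'p \<Rightarrow> real) \<Rightarrow> bool" where
  "R_tree T d \<longleftrightarrow> T \<noteq> {} \<and> metric_on T d \<and> geodesic_space T d \<and> zero_hyperbolic T d"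

definition seg :: "'p set \<Rightarrow> ('p \<Rightarrow> 'p \<Rightarrow> real) \<Rightarrow> 'p \<Rightarrow> 'p \<Rightarrow> 'p set" where
  "seg T d x y = {z \<in> T. d x z + d z y = d x y}"

definition adjacent :: "'p set \<Rightarrow> ('p \<Rightarrow> 'p \<Rightarrow> real) \<Rightarrow> 'p set \<Rightarrow> 'p \<Rightarrow> 'p \<Rightarrow> bool" where
  "adjacent T d V u v \<longleftrightarrow> u \<in> V \<and> v \<in> V \<and> u \<noteq> v \<and> seg T d u v \<inter> V = {u, v}"

text \<open>Metric simplicial tree: an R-tree with a discrete vertex set V such that every
  non-vertex point lies in the interior of an edge [u,v] (a segment between adjacent vertices)
  through which it is connected to the rest of the tree only via u or v.\<close>
definition simplicial_tree :: "'p set \<Rightarrow> ('p \<Rightarrow> 'p \<Rightarrow> real) \<Rightarrow> 'p set \<Rightarrow> bool" where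
  "simplicial_tree T d V \<longleftrightarrow> R_tree T d \<and> V \<subseteq> T \<and> V \<noteq> {} \<and>
     (\<forall>v\<in>V. \<exists>\<epsilon>>0. \<forall>w\<in>V. d v w < \<epsilon> \<longrightarrow> w = v) \<and>
     (\<forall>x \<in> T - V. \<exists>u v. adjacent T d V u v \<and> x \<in> seg T d u v \<and>
        (\<forall>z\<in>T. z \<in> seg T d u v \<or> u \<in> seg T d x z \<or> v \<in> seg T d x z))"

definition orb :: "('g, 'b) monoid_scheme \<Rightarrow> ('g \<Rightarrow> 'p \<Rightarrow> 'p) \<Rightarrow> 'p \<Rightarrow> 'p set" where
  "orb K \<rho> x = {\<rho> g x | g. g \<in> carrier K}"

definition left_action :: "('g, 'b) monoid_scheme \<Rightarrow> 'p set \<Rightarrow> ('g \<Rightarrow> 'p \<Rightarrow> 'p) \<Rightarrow> bool" where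
  "left_action K S \<rho> \<longleftrightarrow>
     (\<forall>g\<in>carrier K. \<forall>x\<in>S. \<rho> g x \<in> S) \<and> (\<forall>x\<in>S. \<rho> \<one>\<^bsub>K\<^esub> x = x) \<and>
     (\<forall>g\<in>carrier K. \<forall>h\<in>carrier K. \<forall>x\<in>S. \<rho> (g \<otimes>\<^bsub>K\<^esub> h) x = \<rho> g (\<rho> h x))"

text \<open>A marked metric graph X, marked by the group K, is represented by its universal cover T
  (a metric simplicial tree with vertex set V) together with the deck action \<rho> of K
  (free, by simplicial isometries, with finite quotient graph X = T/K).\<close>
definition marked_metric_graph ::
  "('g, 'b) monoid_scheme \<Rightarrow> 'p set \<Rightarrow> ('p \<Rightarrow> 'p \<Rightarrow> real) \<Rightarrow> 'p set \<Rightarrow> ('g \<Rightarrow> 'p \<Rightarrow> 'p) \<Rightarrow> bool" where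
  "marked_metric_graph K T d V \<rho> \<longleftrightarrow> group K \<and> simplicial_tree T d V \<and> left_action K T \<rho> \<and>
     (\<forall>g\<in>carrier K. \<forall>x\<in>T. \<forall>y\<in>T. d (\<rho> g x) (\<rho> g y) = d x y) \<and>
     (\<forall>g\<in>carrier K. \<rho> g ` V \<subseteq> V) \<and>
     (\<forall>g\<in>carrier K. \<forall>x\<in>T. \<rho> g x = x \<longrightarrow> g = \<one>\<^bsub>K\<^esub>) \<and>
     finite (orb K \<rho> ` V) \<and>
     finite ((\<lambda>(u, v). {(\<rho> g u, \<rho> g v) | g. g \<in> carrier K}) ` {(u, v). adjacent T d V u v})"

text \<open>Metric on the quotient graph X = T/K.\<close>
definition qdist :: "('p \<Rightarrow> 'p \<Rightarrow> real) \<Rightarrow> 'p set \<Rightarrow> 'p set \<Rightarrow> real" where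
  "qdist d P Q = Inf {d x y | x y. x \<in> P \<and> y \<in> Q}"

text \<open>H acts on X = T/K by isometries realising the outer action \<Psi> : H \<rightarrow> Out(K):
  every h admits a lift to T that is twisted-equivariant w.r.t. an automorphism in \<Psi> h.\<close>
definition realises ::
  "('g, 'b) monoid_scheme \<Rightarrow> 'p set \<Rightarrow> ('p \<Rightarrow> 'p \<Rightarrow> real) \<Rightarrow> ('g \<Rightarrow> 'p \<Rightarrow> 'p)
    \<Rightarrow> ('h, 'c) monoid_scheme \<Rightarrow> ('h \<Rightarrow> ('g \<Rightarrow> 'g) set) \<Rightarrow> ('h \<Rightarrow> 'p set \<Rightarrow> 'p set) \<Rightarrow> bool" where
  "realises K T d \<rho> H \<Psi> \<sigma> \<longleftrightarrow>
     left_action H (orb K \<rho> ` T) \<sigma> \<and>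
     (\<forall>h\<in>carrier H. \<forall>P \<in> orb K \<rho> ` T. \<forall>Q \<in> orb K \<rho> ` T. qdist d (\<sigma> h P) (\<sigma> h Q) = qdist d P Q) \<and>
     (\<forall>h\<in>carrier H. \<exists>f \<alpha>. \<alpha> \<in> \<Psi> h \<and>
        (\<forall>x\<in>T. f x \<in> T \<and> orb K \<rho> (f x) = \<sigma> h (orb K \<rho> x)) \<and>
        (\<forall>g\<in>carrier K. \<forall>x\<in>T. f (\<rho> g x) = \<rho> (\<alpha> g) (f x)))"

end

theory Submission
  imports Defs
begin


lemma metric_facts:
  assumes "metric_on T d"
  shows "\<And>x. x \<in> T \<Longrightarrow> d x x = 0"
    and "\<And>x y. x \<in> T \<Longrightarrow> y \<in> T \<Longrightarrow> d x y = d y x"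
    and "\<And>x y. x \<in> T \<Longrightarrow> y \<in> T \<Longrightarrow> 0 \<le> d x y"
    and "\<And>x y. x \<in> T \<Longrightarrow> y \<in> T \<Longrightarrow> d x y = 0 \<longleftrightarrow> x = y"
    and "\<And>x y z. x \<in> T \<Longrightarrow> y \<in> T \<Longrightarrow> z \<in> T \<Longrightarrow> d x z \<le> d x y + d y z"
  using assms unfolding metric_on_def by blast+

lemma hyp_inst:
  assumes "zero_hyperbolic T d" "w \<in> T" "x \<in> T" "y \<in> T" "z \<in> T"
  shows "min ((d w x + d w y - d x y)/2) ((d w y + d w z - d y z)/2) \<le> (d w x + d w z - d x z)/2"
  using assms unfolding zero_hyperbolic_def gromov_product_def by blast

lemma geod_point:
  assumes "geodesic_space T d" "metric_on T d" "y \<in> T" "x \<in> T" "0 \<le> t" "t \<le> d y x"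
  obtains x' where "x' \<in> T" "d y x' = t" "d x' x = d y x - t"
proof -
  obtain \<gamma> where g: "isometric_embedding {0..d y x} (\<lambda>s t. \<bar>s - t\<bar>) T d \<gamma>" "\<gamma> 0 = y" "\<gamma> (d y x) = x"
    using assms unfolding geodesic_space_def by blast
  have dyx: "0 \<le> d y x" using assms(5,6) by simp
  have "\<gamma> t \<in> T" using g(1) assms(5,6) unfolding isometric_embedding_def by auto
  moreover have "d y (\<gamma> t) = t" using g assms(5,6) dyx unfolding isometric_embedding_def
    by (metis abs_minus_commute abs_of_nonneg atLeastAtMost_iff diff_zero order_refl)
  moreover have "d (\<gamma> t) x = d y x - t" using g assms(5,6) dyx unfolding isometric_embedding_def
    by (metis abs_minus_commute abs_of_nonneg atLeastAtMost_iff diff_ge_0_iff_ge order_refl)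
  ultimately show ?thesis using that by blast
qed

lemma seg_junction:
  assumes M: "metric_on T d" and Ge: "geodesic_space T d" and Z: "zero_hyperbolic T d"
    and xyz: "x \<in> T" "y \<in> T" "z \<in> T"
    and J: "\<And>w. w \<in> seg T d y x \<Longrightarrow> w \<in> seg T d y z \<Longrightarrow> w = y"
  shows "d x z = d x y + d y z"
proof -
  note mf = metric_facts[OF M]
  define t where "t = (d y x + d y z - d x z)/2"
  have t0: "0 \<le> t" using mf(5)[OF xyz(1,2,3)] mf(2)[OF xyz(1,2)] unfolding t_def by simp
  have t1: "t \<le> d y x" using mf(5)[OF xyz(2,1,3)] mf(2)[OF xyz(1,2)] unfolding t_def by simp
  have t2: "t \<le> d y z" using mf(5)[OF xyz(2,3,1)] mf(2)[OF xyz(1,3)] unfolding t_def by simp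
  obtain x' where x': "x' \<in> T" "d y x' = t" "d x' x = d y x - t"
    using geod_point[OF Ge M xyz(2,1) t0 t1] by blast
  obtain z' where z': "z' \<in> T" "d y z' = t" "d z' z = d y z - t"
    using geod_point[OF Ge M xyz(2,3) t0 t2] by blast
  have h1: "min ((d y x' + d y x - d x' x)/2) ((d y x + d y z - d x z)/2) \<le> (d y x' + d y z - d x' z)/2"
    using hyp_inst[OF Z xyz(2) x'(1) xyz(1) xyz(3)] .
  have A: "(d y x' + d y x - d x' x)/2 = t" using x' by simp
  have B: "(d y x + d y z - d x z)/2 = t" unfolding t_def ..
  have C: "t \<le> (d y x' + d y z - d x' z)/2" using h1 A B by simp
  have h2: "min ((d y x' + d y z - d x' z)/2) ((d y z + d y z' - d z z')/2) \<le> (d y x' + d y z' - d x' z')/2"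
    using hyp_inst[OF Z xyz(2) x'(1) xyz(3) z'(1)] .
  have D: "(d y z + d y z' - d z z')/2 = t" using z' mf(2)[OF z'(1) xyz(3)] by simp
  have E: "t \<le> (d y x' + d y z' - d x' z')/2" using h2 C D by simp
  have "d x' z' \<le> 0" using E x'(2) z'(2) by simp
  hence "x' = z'" using mf(3,4)[OF x'(1) z'(1)] by simp
  have "x' \<in> seg T d y x" unfolding seg_def using x' by simp
  moreover have "x' \<in> seg T d y z" unfolding seg_def using z' \<open>x' = z'\<close> by simp
  ultimately have "x' = y" using J by blast
  hence "t = 0" using x'(2) mf(1)[OF xyz(2)] by simp
  thus ?thesis using mf(2)[OF xyz(1,2)] unfolding t_def by simp
qed

lemma four_point_prop:
  assumes M: "metric_on T d" and Z: "zero_hyperbolic T d"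
    and pts: "z0 \<in> T" "u \<in> T" "w \<in> T" "v \<in> T"
    and h1: "d z0 w = d z0 u + d u w" and ne: "u \<noteq> w"
    and h2: "d u v = d u w + d w v"
  shows "d z0 v = d z0 w + d w v"
proof -
  note mf = metric_facts[OF M]
  have h: "min ((d w u + d w z0 - d u z0)/2) ((d w z0 + d w v - d z0 v)/2) \<le> (d w u + d w v - d u v)/2"
    using hyp_inst[OF Z pts(3) pts(2) pts(1) pts(4)] .
  have a: "(d w u + d w z0 - d u z0)/2 = d w u" using h1 mf(2)[OF pts(3,2)] mf(2)[OF pts(1,3)] mf(2)[OF pts(1,2)] by simp
  have pos: "d w u > 0" using mf(3,4)[OF pts(3,2)] ne by force
  have b: "(d w u + d w v - d u v)/2 = 0" using h2 mf(2)[OF pts(3,2)] by simp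
  have "(d w z0 + d w v - d z0 v)/2 \<le> 0" using h a b pos by linarith
  moreover have "d z0 v \<le> d z0 w + d w v" using mf(5)[OF pts(1,3,4)] .
  ultimately show ?thesis using mf(2)[OF pts(1,3)] by simp
qed

lemma convex_image:
  assumes M: "metric_on T d" and Z: "zero_hyperbolic T d"
    and G1: "geodesic_space T1 d1" and emb: "isometric_embedding T1 d1 T d f"
    and u: "u \<in> f ` T1" and v: "v \<in> f ` T1"
  shows "seg T d u v \<subseteq> f ` T1"
proof
  fix z assume z: "z \<in> seg T d u v"
  note mf = metric_facts[OF M]
  obtain a b where ab: "a \<in> T1" "b \<in> T1" "u = f a" "v = f b" using u v by blast
  obtain \<gamma> where g: "isometric_embedding {0..d1 a b} (\<lambda>s t. \<bar>s - t\<bar>) T1 d1 \<gamma>" "\<gamma> 0 = a" "\<gamma> (d1 a b) = b"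
    using G1 ab unfolding geodesic_space_def by blast
  have fT: "f ` T1 \<subseteq> T" and fd: "\<And>x y. x \<in> T1 \<Longrightarrow> y \<in> T1 \<Longrightarrow> d (f x) (f y) = d1 x y"
    using emb unfolding isometric_embedding_def by auto
  have uT: "u \<in> T" "v \<in> T" using fT ab by auto
  have zT: "z \<in> T" and zs: "d u z + d z v = d u v" using z unfolding seg_def by auto
  have D: "d u v = d1 a b" using fd ab by simp
  define t where "t = d u z"
  have t0: "0 \<le> t" "t \<le> d1 a b" using mf(3)[OF uT(1) zT] mf(3)[OF zT uT(2)] zs D unfolding t_def by auto
  have gT: "\<gamma> t \<in> T1" using g(1) t0 unfolding isometric_embedding_def by auto
  have g0: "0 \<in> {0..d1 a b}" "d1 a b \<in> {0..d1 a b}" "t \<in> {0..d1 a b}" using t0 by auto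
  have gd: "\<And>s r. s \<in> {0..d1 a b} \<Longrightarrow> r \<in> {0..d1 a b} \<Longrightarrow> d1 (\<gamma> s) (\<gamma> r) = \<bar>s - r\<bar>"
    using g(1) unfolding isometric_embedding_def by auto
  define w where "w = f (\<gamma> t)"
  have wT: "w \<in> T" using fT gT unfolding w_def by auto
  have uw: "d u w = t" unfolding w_def using fd[OF ab(1) gT] gd[OF g0(1) g0(3)] g(2) ab(3) t0 by simp
  have wv: "d w v = d1 a b - t" unfolding w_def using fd[OF gT ab(2)] gd[OF g0(3) g0(2)] g(3) ab(4) t0 by simp
  have h: "min ((d u z + d u v - d z v)/2) ((d u v + d u w - d v w)/2) \<le> (d u z + d u w - d z w)/2"
    using hyp_inst[OF Z uT(1) zT uT(2) wT] .
  have "(d u z + d u v - d z v)/2 = t" using zs unfolding t_def by simp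
  moreover have "(d u v + d u w - d v w)/2 = t" using uw wv D mf(2)[OF uT(2) wT] by simp
  ultimately have "d z w \<le> 0" using h uw unfolding t_def by simp
  hence "z = w" using mf(3,4)[OF zT wT] by simp
  thus "z \<in> f ` T1" unfolding w_def using gT by blast
qed

fun altw :: "(bool \<Rightarrow> 'g set) \<Rightarrow> 'g \<Rightarrow> ('g \<times> bool) list \<Rightarrow> bool" where
  "altw A o1 [] = True"
| "altw A o1 [(l,c)] = (l \<in> A c \<and> l \<noteq> o1)"
| "altw A o1 ((l,c)#(l',c')#r) = (l \<in> A c \<and> l \<noteq> o1 \<and> c' \<noteq> c \<and> altw A o1 ((l',c')#r))"

lemma altw_tl: "altw A o1 (x#r) \<Longrightarrow> altw A o1 r"
  by (cases x; cases r) auto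

lemma altw_hd: "altw A o1 ((l,c)#r) \<Longrightarrow> l \<in> A c \<and> l \<noteq> o1"
  by (cases r) auto

lemma altw_hd2: "altw A o1 ((l,c)#(l',c')#r) \<Longrightarrow> c' \<noteq> c"
  by auto

lemma altw_set: "altw A o1 ws \<Longrightarrow> (l,c) \<in> set ws \<Longrightarrow> l \<in> A c"
proof (induction ws)
  case Nil thus ?case by simp
next
  case (Cons x r) thus ?case
    by (cases x) (metis altw_hd altw_tl set_ConsD prod.inject)
qed

lemma altw_butlast: "altw A o1 (r @ [x]) \<Longrightarrow> altw A o1 r"
proof (induction r)
  case Nil thus ?case by simp
next
  case (Cons y r)
  show ?case
  proof (cases r)
    case Nil thus ?thesis using Cons.prems by (cases y; cases x) auto
  next
    case (Cons z r') thus ?thesis using Cons.prems Cons.IH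
      by (cases y; cases z) auto
  qed
qed

definition prodw :: "('g, 'b) monoid_scheme \<Rightarrow> ('g \<times> bool) list \<Rightarrow> 'g" where
  "prodw G ws = foldr (\<lambda>(l,c) acc. l \<otimes>\<^bsub>G\<^esub> acc) ws \<one>\<^bsub>G\<^esub>"

lemma prodw_Nil[simp]: "prodw G [] = \<one>\<^bsub>G\<^esub>" by (simp add: prodw_def)
lemma prodw_Cons[simp]: "prodw G ((l,c)#r) = l \<otimes>\<^bsub>G\<^esub> prodw G r" by (simp add: prodw_def)

locale wedge =
  fixes G :: "('g, 'b) monoid_scheme" and A1 A2 :: "'g set"
    and T :: "'p set" and d :: "'p \<Rightarrow> 'p \<Rightarrow> real" and \<rho> :: "'g \<Rightarrow> 'p \<Rightarrow> 'p"
    and S1 S2 :: "'p set" and p :: 'p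
  assumes grp: "group G" and sub1: "subgroup A1 G" and sub2: "subgroup A2 G"
    and gen: "generate G (A1 \<union> A2) = carrier G"
    and M: "metric_on T d" and Ge: "geodesic_space T d" and Z: "zero_hyperbolic T d"
    and act: "left_action G T \<rho>"
    and isom: "\<forall>g\<in>carrier G. \<forall>x\<in>T. \<forall>y\<in>T. d (\<rho> g x) (\<rho> g y) = d x y"
    and free: "\<forall>g\<in>carrier G. \<forall>x\<in>T. \<rho> g x = x \<longrightarrow> g = \<one>\<^bsub>G\<^esub>"
    and S1T: "S1 \<subseteq> T" and S2T: "S2 \<subseteq> T"
    and cvx1: "\<forall>u\<in>S1. \<forall>v\<in>S1. seg T d u v \<subseteq> S1"
    and cvx2: "\<forall>u\<in>S2. \<forall>v\<in>S2. seg T d u v \<subseteq> S2"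
    and inv1: "\<forall>a\<in>A1. \<forall>s\<in>S1. \<rho> a s \<in> S1"
    and inv2: "\<forall>a\<in>A2. \<forall>s\<in>S2. \<rho> a s \<in> S2"
    and meet: "S1 \<inter> S2 = {p}"
begin

definition AA :: "bool \<Rightarrow> 'g set" where "AA c = (if c then A1 else A2)"
definition SS :: "bool \<Rightarrow> 'p set" where "SS c = (if c then S1 else S2)"
definition piece where "piece h c = \<rho> h ` SS c"

lemma subAA: "subgroup (AA c) G" using sub1 sub2 unfolding AA_def by auto
lemma SST: "SS c \<subseteq> T" using S1T S2T unfolding SS_def by auto
lemma cvx: "u \<in> SS c \<Longrightarrow> v \<in> SS c \<Longrightarrow> seg T d u v \<subseteq> SS c"
  using cvx1 cvx2 unfolding SS_def by (cases c) auto
lemma invS: "a \<in> AA c \<Longrightarrow> s \<in> SS c \<Longrightarrow> \<rho> a s \<in> SS c"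
  using inv1 inv2 unfolding SS_def AA_def by (cases c) auto
lemma pS: "p \<in> SS c" using meet unfolding SS_def by auto
lemma pT: "p \<in> T" using pS SST by blast
lemma meetS: "w \<in> SS c \<Longrightarrow> w \<in> SS (\<not> c) \<Longrightarrow> w = p"
  using meet unfolding SS_def by (cases c) auto

lemma AAc: "a \<in> AA c \<Longrightarrow> a \<in> carrier G" using subAA subgroup.subset by blast

lemma actT: "g \<in> carrier G \<Longrightarrow> x \<in> T \<Longrightarrow> \<rho> g x \<in> T" using act unfolding left_action_def by blast
lemma act1: "x \<in> T \<Longrightarrow> \<rho> \<one>\<^bsub>G\<^esub> x = x" using act unfolding left_action_def by blast
lemma actm: "g \<in> carrier G \<Longrightarrow> h \<in> carrier G \<Longrightarrow> x \<in> T \<Longrightarrow> \<rho> (g \<otimes>\<^bsub>G\<^esub> h) x = \<rho> g (\<rho> h x)"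
  using act unfolding left_action_def by blast
lemma actinv: "g \<in> carrier G \<Longrightarrow> x \<in> T \<Longrightarrow> \<rho> (inv\<^bsub>G\<^esub> g) (\<rho> g x) = x"
  by (metis act1 actm grp group.inv_closed group.l_inv)
lemma actinv2: "g \<in> carrier G \<Longrightarrow> x \<in> T \<Longrightarrow> \<rho> g (\<rho> (inv\<^bsub>G\<^esub> g) x) = x"
  by (metis act1 actm grp group.inv_closed group.r_inv)
lemma dist_act: "g \<in> carrier G \<Longrightarrow> x \<in> T \<Longrightarrow> y \<in> T \<Longrightarrow> d (\<rho> g x) (\<rho> g y) = d x y"
  using isom by blast

lemmas mf = metric_facts[OF M]

lemma K:
  assumes h: "h \<in> carrier G" and u: "u \<in> piece h c" and v: "v \<in> piece h (\<not> c)"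
  shows "d u v = d u (\<rho> h p) + d (\<rho> h p) v"
proof -
  obtain u0 v0 where uv: "u0 \<in> SS c" "v0 \<in> SS (\<not> c)" "u = \<rho> h u0" "v = \<rho> h v0"
    using u v unfolding piece_def by blast
  have T0: "u0 \<in> T" "v0 \<in> T" using uv SST by blast+
  have "d u0 v0 = d u0 p + d p v0"
  proof (rule seg_junction[OF M Ge Z T0(1) pT T0(2)])
    fix w assume "w \<in> seg T d p u0" "w \<in> seg T d p v0"
    hence "w \<in> SS c" "w \<in> SS (\<not> c)" using cvx[OF pS uv(1)] cvx[OF pS uv(2)] by blast+
    thus "w = p" using meetS by blast
  qed
  thus ?thesis using uv dist_act[OF h] T0 pT by simp
qed

lemma K':
  assumes h: "h \<in> carrier G" and u: "u \<in> piece h (\<not> c)" and v: "v \<in> piece h c"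
  shows "d u v = d u (\<rho> h p) + d (\<rho> h p) v"
proof -
  have T0: "u \<in> T" "v \<in> T" using u v SST actT[OF h] unfolding piece_def by blast+
  have "d v u = d v (\<rho> h p) + d (\<rho> h p) u" using K[OF h v u] .
  thus ?thesis using mf(2) T0 actT[OF h pT] by (metis add.commute)
qed

definition Inv where
  "Inv x h q c \<longleftrightarrow> h \<in> carrier G \<and> q \<in> piece h c \<and> q \<in> T \<and> q \<noteq> \<rho> h p \<and>
     d x (\<rho> h p) = d x q + d q (\<rho> h p) \<and> 0 < d x (\<rho> h p)"

lemma step:
  assumes I: "Inv x h q c" and l: "l \<in> AA (\<not> c)" "l \<noteq> \<one>\<^bsub>G\<^esub>" and x: "x \<in> T"
  shows "Inv x (h \<otimes>\<^bsub>G\<^esub> l) (\<rho> h p) (\<not> c)"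
proof -
  have h: "h \<in> carrier G" and q: "q \<in> piece h c" "q \<in> T" "q \<noteq> \<rho> h p"
    and dq: "d x (\<rho> h p) = d x q + d q (\<rho> h p)" and pos: "0 < d x (\<rho> h p)"
    using I unfolding Inv_def by auto
  have lc: "l \<in> carrier G" using AAc l(1) .
  have il: "inv\<^bsub>G\<^esub> l \<in> AA (\<not> c)" using subgroup.m_inv_closed[OF subAA l(1)] .
  have hl: "h \<otimes>\<^bsub>G\<^esub> l \<in> carrier G" using monoid.m_closed[OF group.is_monoid[OF grp] h lc] .
  have e1: "\<rho> (h \<otimes>\<^bsub>G\<^esub> l) (\<rho> (inv\<^bsub>G\<^esub> l) p) = \<rho> h p"
  proof -
    have ilc: "inv\<^bsub>G\<^esub> l \<in> carrier G" using AAc[OF il] .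
    have "\<rho> (inv\<^bsub>G\<^esub> l) p \<in> T" using actT[OF ilc pT] .
    hence "\<rho> (h \<otimes>\<^bsub>G\<^esub> l) (\<rho> (inv\<^bsub>G\<^esub> l) p) = \<rho> h (\<rho> l (\<rho> (inv\<^bsub>G\<^esub> l) p))"
      using actm[OF h lc] by blast
    also have "\<dots> = \<rho> h p" using actinv2[OF lc pT] by simp
    finally show ?thesis .
  qed
  have A: "\<rho> h p \<in> piece (h \<otimes>\<^bsub>G\<^esub> l) (\<not> c)"
    unfolding piece_def by (rule rev_image_eqI[where f="\<rho> (h \<otimes>\<^bsub>G\<^esub> l)", OF invS[OF il pS] e1[symmetric]])
  have hpT: "\<rho> h p \<in> T" using actT[OF h pT] .
  have lpT: "\<rho> l p \<in> T" using actT[OF lc pT] .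
  have vdef: "\<rho> (h \<otimes>\<^bsub>G\<^esub> l) p = \<rho> h (\<rho> l p)" using actm[OF h lc pT] .
  have vT: "\<rho> (h \<otimes>\<^bsub>G\<^esub> l) p \<in> T" using actT[OF hl pT] .
  have B: "\<rho> h p \<noteq> \<rho> (h \<otimes>\<^bsub>G\<^esub> l) p"
  proof
    assume "\<rho> h p = \<rho> (h \<otimes>\<^bsub>G\<^esub> l) p"
    hence "\<rho> h p = \<rho> h (\<rho> l p)" using vdef by simp
    hence "\<rho> (inv\<^bsub>G\<^esub> h) (\<rho> h p) = \<rho> (inv\<^bsub>G\<^esub> h) (\<rho> h (\<rho> l p))" by simp
    hence "p = \<rho> l p" using actinv[OF h pT] actinv[OF h lpT] by simp
    hence "l = \<one>\<^bsub>G\<^esub>" using free lc pT by metis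
    thus False using l(2) by simp
  qed
  have vp: "\<rho> (h \<otimes>\<^bsub>G\<^esub> l) p \<in> piece h (\<not> c)"
    unfolding piece_def by (rule rev_image_eqI[where f="\<rho> h", OF invS[OF l(1) pS] vdef])
  have h2: "d q (\<rho> (h \<otimes>\<^bsub>G\<^esub> l) p) = d q (\<rho> h p) + d (\<rho> h p) (\<rho> (h \<otimes>\<^bsub>G\<^esub> l) p)"
    using K[OF h q(1) vp] .
  have C: "d x (\<rho> (h \<otimes>\<^bsub>G\<^esub> l) p) = d x (\<rho> h p) + d (\<rho> h p) (\<rho> (h \<otimes>\<^bsub>G\<^esub> l) p)"
    using four_point_prop[OF M Z x q(2) hpT vT dq q(3) h2] .
  have D: "0 < d x (\<rho> (h \<otimes>\<^bsub>G\<^esub> l) p)" using C pos mf(3)[OF hpT vT] by linarith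
  show ?thesis unfolding Inv_def using hl A hpT B C D by simp
qed

lemma prodw_carrier: "altw AA \<one>\<^bsub>G\<^esub> ws \<Longrightarrow> prodw G ws \<in> carrier G"
proof (induction ws)
  case Nil thus ?case using monoid.one_closed[OF group.is_monoid[OF grp]] by simp
next
  case (Cons x r)
  obtain l c where x: "x = (l,c)" by (cases x)
  have "l \<in> AA c" using altw_hd[of AA _ l c r] Cons.prems x by simp
  hence "l \<in> carrier G" by (rule AAc)
  moreover have "prodw G r \<in> carrier G" using Cons.IH altw_tl[of AA _ x r] Cons.prems by simp
  ultimately show ?case using x monoid.m_closed[OF group.is_monoid[OF grp]] by simp
qed

lemma chain:
  assumes x: "x \<in> T"
  shows "Inv x h q c \<Longrightarrow> altw AA \<one>\<^bsub>G\<^esub> ws \<Longrightarrow> (ws \<noteq> [] \<Longrightarrow> snd (hd ws) = (\<not> c)) \<Longrightarrow>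
    \<exists>q'. Inv x (h \<otimes>\<^bsub>G\<^esub> prodw G ws) q' (if ws = [] then c else snd (last ws))"
proof (induction ws arbitrary: h q c)
  case Nil
  have "h \<in> carrier G" using Nil(1) unfolding Inv_def by auto
  hence "h \<otimes>\<^bsub>G\<^esub> prodw G [] = h" using monoid.r_one[OF group.is_monoid[OF grp]] by simp
  thus ?case using Nil by auto
next
  case (Cons y r)
  obtain l c' where y: "y = (l, c')" by (cases y)
  have c': "c' = (\<not> c)" using Cons.prems(3) y by simp
  have l: "l \<in> AA (\<not> c)" "l \<noteq> \<one>\<^bsub>G\<^esub>" using altw_hd[of AA _ l c' r] Cons.prems(2) y c' by simp_all
  have I2: "Inv x (h \<otimes>\<^bsub>G\<^esub> l) (\<rho> h p) (\<not> c)" using step[OF Cons.prems(1) l x] .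
  have ar: "altw AA \<one>\<^bsub>G\<^esub> r" using altw_tl[of AA _ y r] Cons.prems(2) by simp
  have hr: "r \<noteq> [] \<Longrightarrow> snd (hd r) = (\<not> \<not> c)"
  proof -
    assume "r \<noteq> []"
    then obtain l2 c2 r2 where r: "r = (l2,c2)#r2" by (cases r) auto
    have "c2 \<noteq> c'" using altw_hd2[of AA _ l c' l2 c2 r2] Cons.prems(2) y r by simp
    thus ?thesis using r c' by simp
  qed
  obtain q' where q': "Inv x ((h \<otimes>\<^bsub>G\<^esub> l) \<otimes>\<^bsub>G\<^esub> prodw G r) q' (if r = [] then \<not> c else snd (last r))"
    using Cons.IH[OF I2 ar hr] by blast
  have hc: "h \<in> carrier G" using Cons.prems(1) unfolding Inv_def by auto
  have eq: "(h \<otimes>\<^bsub>G\<^esub> l) \<otimes>\<^bsub>G\<^esub> prodw G r = h \<otimes>\<^bsub>G\<^esub> prodw G (y#r)"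
    using y monoid.m_assoc[OF group.is_monoid[OF grp] hc AAc[OF l(1)] prodw_carrier[OF ar]] by simp
  have ifeq: "(if r = [] then \<not> c else snd (last r)) = (if y#r = [] then c else snd (last (y#r)))"
    using y c' by auto
  from q' have "Inv x (h \<otimes>\<^bsub>G\<^esub> prodw G (y#r)) q' (if r = [] then \<not> c else snd (last r))"
    by (simp only: eq)
  hence "Inv x (h \<otimes>\<^bsub>G\<^esub> prodw G (y#r)) q' (if y#r = [] then c else snd (last (y#r)))"
    by (simp only: ifeq)
  thus ?case by blast
qed

end




context wedge begin

lemma mon: "monoid G" using group.is_monoid[OF grp] .

lemma letter:
  assumes l: "l \<in> AA c" and ws: "altw AA \<one>\<^bsub>G\<^esub> ws"
  shows "\<exists>ws'. altw AA \<one>\<^bsub>G\<^esub> ws' \<and> l \<otimes>\<^bsub>G\<^esub> prodw G ws = prodw G ws'"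
proof -
  have lc: "l \<in> carrier G" using AAc[OF l] .
  have pc: "prodw G ws \<in> carrier G" using prodw_carrier[OF ws] .
  show ?thesis
  proof (cases "l = \<one>\<^bsub>G\<^esub>")
    case True thus ?thesis using ws monoid.l_one[OF mon pc] by auto
  next
    case lne: False
    show ?thesis
    proof (cases ws)
      case Nil
      have "altw AA \<one>\<^bsub>G\<^esub> [(l,c)]" using l lne by simp
      moreover have "l \<otimes>\<^bsub>G\<^esub> prodw G ws = prodw G [(l,c)]" using Nil by simp
      ultimately show ?thesis by blast
    next
      case (Cons y r)
      obtain l1 c1 where y: "y = (l1,c1)" by (cases y)
      have l1: "l1 \<in> AA c1" "l1 \<noteq> \<one>\<^bsub>G\<^esub>" using altw_hd[of AA _ l1 c1 r] ws Cons y by simp_all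
      have ar: "altw AA \<one>\<^bsub>G\<^esub> r" using altw_tl[of AA _ y r] ws Cons by simp
      have l1c: "l1 \<in> carrier G" using AAc[OF l1(1)] .
      have rc: "prodw G r \<in> carrier G" using prodw_carrier[OF ar] .
      show ?thesis
      proof (cases "c1 = c")
        case False
        have "altw AA \<one>\<^bsub>G\<^esub> ((l,c)#ws)" using ws Cons y False l lne by simp
        moreover have "l \<otimes>\<^bsub>G\<^esub> prodw G ws = prodw G ((l,c)#ws)" by simp
        ultimately show ?thesis by blast
      next
        case True
        define m where "m = l \<otimes>\<^bsub>G\<^esub> l1"
        have m: "m \<in> AA c" unfolding m_def using subgroup.m_closed[OF subAA l] l1(1) True by simp
        have eq: "l \<otimes>\<^bsub>G\<^esub> prodw G ws = m \<otimes>\<^bsub>G\<^esub> prodw G r"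
          unfolding m_def using Cons y monoid.m_assoc[OF mon lc l1c rc] by simp
        show ?thesis
        proof (cases "m = \<one>\<^bsub>G\<^esub>")
          case True
          thus ?thesis using eq monoid.l_one[OF mon rc] ar by auto
        next
          case mne: False
          have "altw AA \<one>\<^bsub>G\<^esub> ((m,c)#r)"
          proof (cases r)
            case Nil thus ?thesis using m mne by simp
          next
            case (Cons z r')
            obtain l2 c2 where z: "z = (l2,c2)" by (cases z)
            have "c2 \<noteq> c1" using altw_hd2[of AA _ l1 c1 l2 c2 r'] ws \<open>ws = y#r\<close> y Cons z by simp
            thus ?thesis using m mne ar Cons z True by simp
          qed
          moreover have "l \<otimes>\<^bsub>G\<^esub> prodw G ws = prodw G ((m,c)#r)" using eq by simp
          ultimately show ?thesis by blast
        qed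
      qed
    qed
  qed
qed

lemma nf:
  assumes g: "g \<in> carrier G"
  shows "\<exists>ws. altw AA \<one>\<^bsub>G\<^esub> ws \<and> g = prodw G ws"
proof -
  have gg: "g \<in> generate G (A1 \<union> A2)" using g gen by simp
  have "g \<in> carrier G \<and> (\<forall>ws. altw AA \<one>\<^bsub>G\<^esub> ws \<longrightarrow> (\<exists>ws'. altw AA \<one>\<^bsub>G\<^esub> ws' \<and> g \<otimes>\<^bsub>G\<^esub> prodw G ws = prodw G ws'))"
    using gg
  proof (induction rule: generate.induct)
    case one
    show ?case using monoid.one_closed[OF mon] monoid.l_one[OF mon prodw_carrier] by auto
  next
    case (incl h)
    then obtain c where "h \<in> AA c" unfolding AA_def by (metis Un_iff)
    thus ?case using letter AAc by blast
  next
    case (inv h)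
    then obtain c where hc: "h \<in> AA c" unfolding AA_def by (metis Un_iff)
    hence "inv\<^bsub>G\<^esub> h \<in> AA c" using subgroup.m_inv_closed[OF subAA] by blast
    thus ?case using letter AAc by blast
  next
    case (eng h1 h2)
    have c: "h1 \<otimes>\<^bsub>G\<^esub> h2 \<in> carrier G" using eng.IH monoid.m_closed[OF mon] by blast
    have "\<forall>ws. altw AA \<one>\<^bsub>G\<^esub> ws \<longrightarrow> (\<exists>ws'. altw AA \<one>\<^bsub>G\<^esub> ws' \<and> (h1 \<otimes>\<^bsub>G\<^esub> h2) \<otimes>\<^bsub>G\<^esub> prodw G ws = prodw G ws')"
    proof (intro allI impI)
      fix ws assume ws: "altw AA \<one>\<^bsub>G\<^esub> ws"
      obtain ws1 where w1: "altw AA \<one>\<^bsub>G\<^esub> ws1" "h2 \<otimes>\<^bsub>G\<^esub> prodw G ws = prodw G ws1" using eng.IH(2) ws by blast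
      obtain ws2 where w2: "altw AA \<one>\<^bsub>G\<^esub> ws2" "h1 \<otimes>\<^bsub>G\<^esub> prodw G ws1 = prodw G ws2" using eng.IH(1) w1(1) by blast
      have "(h1 \<otimes>\<^bsub>G\<^esub> h2) \<otimes>\<^bsub>G\<^esub> prodw G ws = h1 \<otimes>\<^bsub>G\<^esub> (h2 \<otimes>\<^bsub>G\<^esub> prodw G ws)"
        using monoid.m_assoc[OF mon] eng.IH prodw_carrier[OF ws] by blast
      thus "\<exists>ws'. altw AA \<one>\<^bsub>G\<^esub> ws' \<and> (h1 \<otimes>\<^bsub>G\<^esub> h2) \<otimes>\<^bsub>G\<^esub> prodw G ws = prodw G ws'"
        using w1 w2 by auto
    qed
    thus ?case using c by blast
  qed
  hence "altw AA \<one>\<^bsub>G\<^esub> [] \<longrightarrow> (\<exists>ws'. altw AA \<one>\<^bsub>G\<^esub> ws' \<and> g \<otimes>\<^bsub>G\<^esub> prodw G [] = prodw G ws')" by blast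
  then obtain ws' where "altw AA \<one>\<^bsub>G\<^esub> ws'" "g \<otimes>\<^bsub>G\<^esub> prodw G [] = prodw G ws'" by auto
  thus ?thesis using monoid.r_one[OF mon g] by auto
qed

end



context wedge begin

lemma prodw_snoc:
  assumes "altw AA \<one>\<^bsub>G\<^esub> (r @ [(l,c)])"
  shows "prodw G (r @ [(l,c)]) = prodw G r \<otimes>\<^bsub>G\<^esub> l"
  using assms
proof (induction r)
  case Nil
  have "l \<in> AA c" using altw_hd[of AA _ l c "[]"] Nil.prems by simp
  hence "l \<in> carrier G" by (rule AAc)
  thus ?case using monoid.r_one[OF mon] monoid.l_one[OF mon] by simp
next
  case (Cons y r)
  obtain a b where y: "y = (a,b)" by (cases y)
  have ar: "altw AA \<one>\<^bsub>G\<^esub> (r @ [(l,c)])" using altw_tl[of AA _ y "r @ [(l,c)]"] Cons.prems by simp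
  have "a \<in> AA b" using altw_hd[of AA _ a b "r @ [(l,c)]"] Cons.prems y by simp
  hence a: "a \<in> carrier G" by (rule AAc)
  have l: "l \<in> carrier G" using AAc altw_set[OF ar, of l c] by simp
  have rc: "prodw G r \<in> carrier G" using prodw_carrier[OF altw_butlast[OF ar]] .
  show ?case using Cons.IH[OF ar] y monoid.m_assoc[OF mon a rc l] by simp
qed

lemma main_aux:
  "altw AA \<one>\<^bsub>G\<^esub> ws \<Longrightarrow> x \<in> S1 \<Longrightarrow> y \<in> S2 \<Longrightarrow> x = \<rho> (prodw G ws) y \<Longrightarrow> \<exists>k\<in>carrier G. x = \<rho> k p"
proof (induction ws arbitrary: x y rule: measure_induct_rule[where f=length])
  case (less ws x y)
  have xT: "x \<in> T" and yT: "y \<in> T" using less.prems S1T S2T by auto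
  have one: "\<one>\<^bsub>G\<^esub> \<in> carrier G" using monoid.one_closed[OF mon] .
  show ?case
  proof (cases ws)
    case Nil
    hence "x = y" using less.prems(4) act1[OF yT] by simp
    hence "x = p" using meet less.prems by auto
    thus ?thesis using act1[OF pT] one by metis
  next
    case (Cons z r)
    obtain l c where z: "z = (l,c)" by (cases z)
    have ar: "altw AA \<one>\<^bsub>G\<^esub> r" using altw_tl[of AA _ z r] less.prems(1) Cons by simp
    have lA: "l \<in> AA c" "l \<noteq> \<one>\<^bsub>G\<^esub>" using altw_hd[of AA _ l c r] less.prems(1) Cons z by simp_all
    have lc: "l \<in> carrier G" using AAc[OF lA(1)] .
    have rc: "prodw G r \<in> carrier G" using prodw_carrier[OF ar] .
    show ?thesis
    proof (cases c)
      case True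
      have lA1: "l \<in> A1" using lA(1) True unfolding AA_def by simp
      define w where "w = \<rho> (prodw G r) y"
      have wT: "w \<in> T" unfolding w_def using actT[OF rc yT] .
      have xw: "x = \<rho> l w" unfolding w_def using less.prems(4) Cons z actm[OF lc rc yT] by simp
      have "\<rho> (inv\<^bsub>G\<^esub> l) x = w" using xw actinv[OF lc wT] by simp
      moreover have "inv\<^bsub>G\<^esub> l \<in> A1" using subgroup.m_inv_closed[OF sub1 lA1] .
      ultimately have wS: "w \<in> S1" using inv1 less.prems(2) by metis
      obtain k where k: "k \<in> carrier G" "w = \<rho> k p"
        using less.IH[of r w y] Cons ar wS less.prems(3) unfolding w_def by auto
      have "x = \<rho> (l \<otimes>\<^bsub>G\<^esub> k) p" using xw k actm[OF lc k(1) pT] by simp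
      thus ?thesis using monoid.m_closed[OF mon lc k(1)] by blast
    next
      case cF: False
      obtain r0 z' where ws2: "ws = r0 @ [z']" using Cons by (metis rev_exhaust list.distinct(1))
      obtain l' c' where z': "z' = (l',c')" by (cases z')
      have ar0: "altw AA \<one>\<^bsub>G\<^esub> r0" using altw_butlast[of AA _ r0 z'] less.prems(1) ws2 by simp
      have l'A: "l' \<in> AA c'" using altw_set[OF less.prems(1), of l' c'] ws2 z' by simp
      have l'c: "l' \<in> carrier G" using AAc[OF l'A] .
      show ?thesis
      proof (cases c')
        case False
        have l'A2: "l' \<in> A2" using l'A False unfolding AA_def by simp
        have pe: "prodw G ws = prodw G r0 \<otimes>\<^bsub>G\<^esub> l'"
          using prodw_snoc[of r0 l' c'] less.prems(1) ws2 z' by simp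
        define y' where "y' = \<rho> l' y"
        have y'S: "y' \<in> S2" unfolding y'_def using inv2 l'A2 less.prems(3) by blast
        have "x = \<rho> (prodw G r0) y'"
          unfolding y'_def using less.prems(4) pe actm[OF prodw_carrier[OF ar0] l'c yT] by simp
        thus ?thesis using less.IH[of r0 x y'] ws2 ar0 less.prems(2) y'S by simp
      next
        case cT: True
        have lA2: "l \<in> AA False" using lA(1) cF by simp
        have ilA: "inv\<^bsub>G\<^esub> l \<in> AA False" using subgroup.m_inv_closed[OF subAA lA2] .
        have ilc: "inv\<^bsub>G\<^esub> l \<in> carrier G" using AAc[OF ilA] .
        have lpT: "\<rho> l p \<in> T" using actT[OF lc pT] .
        have I0a: "p \<in> piece l False"
          unfolding piece_def
          by (rule rev_image_eqI[where f="\<rho> l", OF invS[OF ilA pS] actinv2[OF lc pT, symmetric]])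
        have I0b: "p \<noteq> \<rho> l p"
        proof
          assume "p = \<rho> l p" hence "l = \<one>\<^bsub>G\<^esub>" using free lc pT by metis
          thus False using lA(2) by simp
        qed
        have xp1: "x \<in> piece \<one>\<^bsub>G\<^esub> True"
          unfolding piece_def SS_def using less.prems(2) act1[OF xT] by (metis image_eqI)
        have lp1: "\<rho> l p \<in> piece \<one>\<^bsub>G\<^esub> (\<not> True)"
          unfolding piece_def using act1[OF lpT] invS[OF lA2 pS] by (metis image_eqI)
        have I0c: "d x (\<rho> l p) = d x p + d p (\<rho> l p)"
          using K[OF one xp1 lp1] act1[OF pT] by simp
        have "0 < d p (\<rho> l p)" using mf(3,4)[OF pT lpT] I0b by force
        hence I0d: "0 < d x (\<rho> l p)" using I0c mf(3)[OF xT pT] by linarith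
        have I0: "Inv x l p False" unfolding Inv_def using lc I0a pT I0b I0c I0d by simp
        have rne: "r \<noteq> []"
        proof
          assume "r = []" hence "ws = [(l,False)]" using Cons z cF by simp
          thus False using ws2 z' cT by simp
        qed
        have hr: "snd (hd r) = (\<not> False)"
        proof -
          obtain l2 c2 r2 where r: "r = (l2,c2)#r2" using rne by (cases r) auto
          have "c2 \<noteq> c" using altw_hd2[of AA _ l c l2 c2 r2] less.prems(1) Cons z r by simp
          thus ?thesis using r cF by simp
        qed
        obtain q' where q': "Inv x (l \<otimes>\<^bsub>G\<^esub> prodw G r) q' (if r = [] then False else snd (last r))"
          using chain[OF xT I0 ar] hr by blast
        have lastr: "snd (last r) = True" using ws2 z' cT Cons rne by (metis last_ConsR last_snoc snd_conv)
        define g where "g = prodw G ws"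
        have gd: "g = l \<otimes>\<^bsub>G\<^esub> prodw G r" unfolding g_def using Cons z by simp
        have Ig: "Inv x g q' True" using q' rne lastr gd by simp
        have gc: "g \<in> carrier G" and q'p: "q' \<in> piece g True" and q'T: "q' \<in> T" and ne: "q' \<noteq> \<rho> g p"
          and h1: "d x (\<rho> g p) = d x q' + d q' (\<rho> g p)" and pos: "0 < d x (\<rho> g p)"
          using Ig unfolding Inv_def by auto
        have xg: "x \<in> piece g (\<not> True)" unfolding piece_def SS_def g_def
          using less.prems(3,4) by simp
        have h2: "d q' x = d q' (\<rho> g p) + d (\<rho> g p) x" using K[OF gc q'p xg] .
        have gpT: "\<rho> g p \<in> T" using actT[OF gc pT] .
        have "d x x = d x (\<rho> g p) + d (\<rho> g p) x"
          using four_point_prop[OF M Z xT q'T gpT xT h1 ne h2] .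
        hence False using mf(1)[OF xT] mf(3)[OF gpT xT] pos by linarith
        thus ?thesis ..
      qed
    qed
  qed
qed

lemma main:
  assumes "x \<in> S1" "y \<in> S2" "g \<in> carrier G" "x = \<rho> g y"
  shows "\<exists>k\<in>carrier G. x = \<rho> k p"
  using nf[OF assms(3)] main_aux assms by blast

end



lemma orb_shift:
  assumes "left_action G T \<rho>" "group G" "k \<in> carrier G" "p \<in> T"
  shows "orb G \<rho> (\<rho> k p) = orb G \<rho> p"
proof -
  have mul: "\<And>g h x. g \<in> carrier G \<Longrightarrow> h \<in> carrier G \<Longrightarrow> x \<in> T \<Longrightarrow> \<rho> (g \<otimes>\<^bsub>G\<^esub> h) x = \<rho> g (\<rho> h x)"
    using assms(1) unfolding left_action_def by blast
  have one: "\<And>x. x \<in> T \<Longrightarrow> \<rho> \<one>\<^bsub>G\<^esub> x = x" using assms(1) unfolding left_action_def by blast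
  show ?thesis
  proof
    show "orb G \<rho> (\<rho> k p) \<subseteq> orb G \<rho> p"
    proof
      fix z assume "z \<in> orb G \<rho> (\<rho> k p)"
      then obtain g where g: "g \<in> carrier G" "z = \<rho> g (\<rho> k p)" unfolding orb_def by blast
      hence "z = \<rho> (g \<otimes>\<^bsub>G\<^esub> k) p" using mul[OF g(1) assms(3,4)] by simp
      moreover have "g \<otimes>\<^bsub>G\<^esub> k \<in> carrier G" using monoid.m_closed[OF group.is_monoid[OF assms(2)] g(1) assms(3)] .
      ultimately show "z \<in> orb G \<rho> p" unfolding orb_def by blast
    qed
  next
    show "orb G \<rho> p \<subseteq> orb G \<rho> (\<rho> k p)"
    proof
      fix z assume "z \<in> orb G \<rho> p"
      then obtain g where g: "g \<in> carrier G" "z = \<rho> g p" unfolding orb_def by blast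
      have ik: "inv\<^bsub>G\<^esub> k \<in> carrier G" using group.inv_closed[OF assms(2,3)] .
      have gk: "g \<otimes>\<^bsub>G\<^esub> inv\<^bsub>G\<^esub> k \<in> carrier G" using monoid.m_closed[OF group.is_monoid[OF assms(2)] g(1) ik] .
      have kpT: "\<rho> k p \<in> T" using assms(1,3,4) unfolding left_action_def by blast
      have e1: "\<rho> (g \<otimes>\<^bsub>G\<^esub> inv\<^bsub>G\<^esub> k) (\<rho> k p) = \<rho> g (\<rho> (inv\<^bsub>G\<^esub> k) (\<rho> k p))"
        using mul[OF g(1) ik kpT] .
      have e2: "\<rho> (inv\<^bsub>G\<^esub> k) (\<rho> k p) = p"
        using mul[OF ik assms(3,4)] group.l_inv[OF assms(2,3)] one[OF assms(4)] by simp
      have "z = \<rho> (g \<otimes>\<^bsub>G\<^esub> inv\<^bsub>G\<^esub> k) (\<rho> k p)" using g e1 e2 by simp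
      thus "z \<in> orb G \<rho> (\<rho> k p)" unfolding orb_def using gk by blast
    qed
  qed
qed

theorem lemma3p4:
  fixes G :: "'g monoid" and n :: nat and A1 A2 :: "'g set"
    and H :: "'h monoid" and \<phi> :: "'h \<Rightarrow> ('g \<Rightarrow> 'g) set"
    and T :: "'p set" and d :: "'p \<Rightarrow> 'p \<Rightarrow> real" and V :: "'p set"
    and \<rho> :: "'g \<Rightarrow> 'p \<Rightarrow> 'p" and \<sigma> :: "'h \<Rightarrow> 'p set \<Rightarrow> 'p set"
    and T1 :: "'q1 set" and d1 :: "'q1 \<Rightarrow> 'q1 \<Rightarrow> real" and V1 :: "'q1 set"
    and \<rho>1 :: "'g \<Rightarrow> 'q1 \<Rightarrow> 'q1" and \<sigma>1 :: "'h \<Rightarrow> 'q1 set \<Rightarrow> 'q1 set"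
    and T2 :: "'q2 set" and d2 :: "'q2 \<Rightarrow> 'q2 \<Rightarrow> real" and V2 :: "'q2 set"
    and \<rho>2 :: "'g \<Rightarrow> 'q2 \<Rightarrow> 'q2" and \<sigma>2 :: "'h \<Rightarrow> 'q2 set \<Rightarrow> 'q2 set"
    and lift1 :: "'q1 \<Rightarrow> 'p" and lift2 :: "'q2 \<Rightarrow> 'p"
    and \<iota>1 :: "'q1 set \<Rightarrow> 'p set" and \<iota>2 :: "'q2 set \<Rightarrow> 'p set"
    and p :: 'p
  assumes Fn: "group G" "free_of_rank G n"
    and free_prod: "internal_free_product G A1 A2"
    and nontriv: "A1 \<noteq> {\<one>\<^bsub>G\<^esub>}" "A2 \<noteq> {\<one>\<^bsub>G\<^esub>}"
    and H: "group H" "finite (carrier H)"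
    and phi_hom: "\<phi> \<in> hom H (Out_group G)"
    and pres1: "\<forall>h\<in>carrier H. \<forall>\<alpha>\<in>\<phi> h. \<exists>c\<in>carrier G.
                  \<alpha> ` A1 = (\<lambda>a. c \<otimes>\<^bsub>G\<^esub> a \<otimes>\<^bsub>G\<^esub> inv\<^bsub>G\<^esub> c) ` A1"
    and pres2: "\<forall>h\<in>carrier H. \<forall>\<alpha>\<in>\<phi> h. \<exists>c\<in>carrier G.
                  \<alpha> ` A2 = (\<lambda>a. c \<otimes>\<^bsub>G\<^esub> a \<otimes>\<^bsub>G\<^esub> inv\<^bsub>G\<^esub> c) ` A2"
    and X_graph: "marked_metric_graph G T d V \<rho>"
    and X_real: "realises G T d \<rho> H \<phi> \<sigma>"
    and X_comb: "\<forall>h\<in>carrier H. \<sigma> h ` (orb G \<rho> ` V) \<subseteq> orb G \<rho> ` V"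
    and X1_graph: "marked_metric_graph (G\<lparr>carrier := A1\<rparr>) T1 d1 V1 \<rho>1"
    and X1_real: "realises (G\<lparr>carrier := A1\<rparr>) T1 d1 \<rho>1 H (induced_out G A1 \<phi>) \<sigma>1"
    and X2_graph: "marked_metric_graph (G\<lparr>carrier := A2\<rparr>) T2 d2 V2 \<rho>2"
    and X2_real: "realises (G\<lparr>carrier := A2\<rparr>) T2 d2 \<rho>2 H (induced_out G A2 \<phi>) \<sigma>2"
    and lift1_isom: "isometric_embedding T1 d1 T d lift1"
    and lift1_equiv: "\<forall>a\<in>A1. \<forall>y\<in>T1. lift1 (\<rho>1 a y) = \<rho> a (lift1 y)"
    and lift2_isom: "isometric_embedding T2 d2 T d lift2"
    and lift2_equiv: "\<forall>a\<in>A2. \<forall>y\<in>T2. lift2 (\<rho>2 a y) = \<rho> a (lift2 y)"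
    and \<iota>1_lift: "\<forall>y\<in>T1. \<iota>1 (orb (G\<lparr>carrier := A1\<rparr>) \<rho>1 y) = orb G \<rho> (lift1 y)"
    and \<iota>2_lift: "\<forall>y\<in>T2. \<iota>2 (orb (G\<lparr>carrier := A2\<rparr>) \<rho>2 y) = orb G \<rho> (lift2 y)"
    and \<iota>1_emb: "inj_on \<iota>1 (orb (G\<lparr>carrier := A1\<rparr>) \<rho>1 ` T1)" "\<forall>P\<in>(orb (G\<lparr>carrier := A1\<rparr>) \<rho>1 ` T1). \<forall>Q\<in>(orb (G\<lparr>carrier := A1\<rparr>) \<rho>1 ` T1). qdist d (\<iota>1 P) (\<iota>1 Q) = qdist d1 P Q"
    and \<iota>2_emb: "inj_on \<iota>2 (orb (G\<lparr>carrier := A2\<rparr>) \<rho>2 ` T2)" "\<forall>P\<in>(orb (G\<lparr>carrier := A2\<rparr>) \<rho>2 ` T2). \<forall>Q\<in>(orb (G\<lparr>carrier := A2\<rparr>) \<rho>2 ` T2). qdist d (\<iota>2 P) (\<iota>2 Q) = qdist d2 P Q"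
    and \<iota>1_H: "\<forall>h\<in>carrier H. \<forall>P\<in>(orb (G\<lparr>carrier := A1\<rparr>) \<rho>1 ` T1). \<iota>1 (\<sigma>1 h P) = \<sigma> h (\<iota>1 P)"
    and \<iota>2_H: "\<forall>h\<in>carrier H. \<forall>P\<in>(orb (G\<lparr>carrier := A2\<rparr>) \<rho>2 ` T2). \<iota>2 (\<sigma>2 h P) = \<sigma> h (\<iota>2 P)"
    and cover: "orb G \<rho> ` T = \<iota>1 ` (orb (G\<lparr>carrier := A1\<rparr>) \<rho>1 ` T1) \<union> \<iota>2 ` (orb (G\<lparr>carrier := A2\<rparr>) \<rho>2 ` T2)"
    and single: "lift1 ` T1 \<inter> lift2 ` T2 = {p}"
  shows "\<forall>h\<in>carrier H. \<sigma> h (orb G \<rho> p) = orb G \<rho> p"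
proof -
  let ?K1 = "G\<lparr>carrier := A1\<rparr>" and ?K2 = "G\<lparr>carrier := A2\<rparr>"
  have grp: "group G" using Fn(1) .
  have sub1: "subgroup A1 G" using free_prod[unfolded internal_free_product_def] by (elim conjE) assumption
  have sub2: "subgroup A2 G" using free_prod[unfolded internal_free_product_def] by (elim conjE) assumption
  have gen: "generate G (A1 \<union> A2) = carrier G" using free_prod[unfolded internal_free_product_def] by (elim conjE) assumption
  have st: "simplicial_tree T d V" using X_graph[unfolded marked_metric_graph_def] by (elim conjE) assumption
  have act: "left_action G T \<rho>" using X_graph[unfolded marked_metric_graph_def] by (elim conjE) assumption
  have isom: "\<forall>g\<in>carrier G. \<forall>x\<in>T. \<forall>y\<in>T. d (\<rho> g x) (\<rho> g y) = d x y"
    using X_graph[unfolded marked_metric_graph_def] by (elim conjE) assumption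
  have free: "\<forall>g\<in>carrier G. \<forall>x\<in>T. \<rho> g x = x \<longrightarrow> g = \<one>\<^bsub>G\<^esub>"
    using X_graph[unfolded marked_metric_graph_def] by (elim conjE) assumption
  have Rt: "R_tree T d" using st[unfolded simplicial_tree_def] by (elim conjE) assumption
  have M: "metric_on T d" using Rt[unfolded R_tree_def] by (elim conjE) assumption
  have Ge: "geodesic_space T d" using Rt[unfolded R_tree_def] by (elim conjE) assumption
  have Z: "zero_hyperbolic T d" using Rt[unfolded R_tree_def] by (elim conjE) assumption
  have st1: "simplicial_tree T1 d1 V1" using X1_graph[unfolded marked_metric_graph_def] by (elim conjE) assumption
  have act1: "left_action ?K1 T1 \<rho>1" using X1_graph[unfolded marked_metric_graph_def] by (elim conjE) assumption
  have Rt1: "R_tree T1 d1" using st1[unfolded simplicial_tree_def] by (elim conjE) assumption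
  have Ge1: "geodesic_space T1 d1" using Rt1[unfolded R_tree_def] by (elim conjE) assumption
  have st2: "simplicial_tree T2 d2 V2" using X2_graph[unfolded marked_metric_graph_def] by (elim conjE) assumption
  have act2: "left_action ?K2 T2 \<rho>2" using X2_graph[unfolded marked_metric_graph_def] by (elim conjE) assumption
  have Rt2: "R_tree T2 d2" using st2[unfolded simplicial_tree_def] by (elim conjE) assumption
  have Ge2: "geodesic_space T2 d2" using Rt2[unfolded R_tree_def] by (elim conjE) assumption
  have S1T: "lift1 ` T1 \<subseteq> T" using lift1_isom unfolding isometric_embedding_def by auto
  have S2T: "lift2 ` T2 \<subseteq> T" using lift2_isom unfolding isometric_embedding_def by auto
  have cvx1: "\<forall>u\<in>lift1 ` T1. \<forall>v\<in>lift1 ` T1. seg T d u v \<subseteq> lift1 ` T1"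
    using convex_image[OF M Z Ge1 lift1_isom] by blast
  have cvx2: "\<forall>u\<in>lift2 ` T2. \<forall>v\<in>lift2 ` T2. seg T d u v \<subseteq> lift2 ` T2"
    using convex_image[OF M Z Ge2 lift2_isom] by blast
  have inv1: "\<forall>a\<in>A1. \<forall>s\<in>lift1 ` T1. \<rho> a s \<in> lift1 ` T1"
  proof (intro ballI)
    fix a s assume a: "a \<in> A1" and s: "s \<in> lift1 ` T1"
    then obtain y where y: "y \<in> T1" "s = lift1 y" by blast
    have "\<rho>1 a y \<in> T1" using act1 a y(1) unfolding left_action_def by auto
    moreover have "\<rho> a s = lift1 (\<rho>1 a y)" using lift1_equiv a y by simp
    ultimately show "\<rho> a s \<in> lift1 ` T1" by blast
  qed
  have inv2: "\<forall>a\<in>A2. \<forall>s\<in>lift2 ` T2. \<rho> a s \<in> lift2 ` T2"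
  proof (intro ballI)
    fix a s assume a: "a \<in> A2" and s: "s \<in> lift2 ` T2"
    then obtain y where y: "y \<in> T2" "s = lift2 y" by blast
    have "\<rho>2 a y \<in> T2" using act2 a y(1) unfolding left_action_def by auto
    moreover have "\<rho> a s = lift2 (\<rho>2 a y)" using lift2_equiv a y by simp
    ultimately show "\<rho> a s \<in> lift2 ` T2" by blast
  qed
  have wd: "wedge G A1 A2 T d \<rho> (lift1 ` T1) (lift2 ` T2) p"
    unfolding wedge_def by (intro conjI grp sub1 sub2 gen M Ge Z act isom free S1T S2T cvx1 cvx2 inv1 inv2 single)
  interpret W: wedge G A1 A2 T d \<rho> "lift1 ` T1" "lift2 ` T2" p by (rule wd)
  have la1: "left_action H (orb ?K1 \<rho>1 ` T1) \<sigma>1" using X1_real[unfolded realises_def] by (elim conjE) assumption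
  have la2: "left_action H (orb ?K2 \<rho>2 ` T2) \<sigma>2" using X2_real[unfolded realises_def] by (elim conjE) assumption
  obtain y1 where y1: "y1 \<in> T1" "p = lift1 y1" using single by blast
  obtain y2 where y2: "y2 \<in> T2" "p = lift2 y2" using single by blast
  show ?thesis
  proof
    fix h assume h: "h \<in> carrier H"
    have P1: "orb ?K1 \<rho>1 y1 \<in> orb ?K1 \<rho>1 ` T1" using y1 by blast
    have P2: "orb ?K2 \<rho>2 y2 \<in> orb ?K2 \<rho>2 ` T2" using y2 by blast
    have cl1: "\<forall>g\<in>carrier H. \<forall>x\<in>orb ?K1 \<rho>1 ` T1. \<sigma>1 g x \<in> orb ?K1 \<rho>1 ` T1"
      using la1[unfolded left_action_def] by (elim conjE) assumption
    have "\<sigma>1 h (orb ?K1 \<rho>1 y1) \<in> orb ?K1 \<rho>1 ` T1" using cl1 h P1 by blast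
    then obtain y1' where y1': "y1' \<in> T1" "\<sigma>1 h (orb ?K1 \<rho>1 y1) = orb ?K1 \<rho>1 y1'" by blast
    have cl2: "\<forall>g\<in>carrier H. \<forall>x\<in>orb ?K2 \<rho>2 ` T2. \<sigma>2 g x \<in> orb ?K2 \<rho>2 ` T2"
      using la2[unfolded left_action_def] by (elim conjE) assumption
    have "\<sigma>2 h (orb ?K2 \<rho>2 y2) \<in> orb ?K2 \<rho>2 ` T2" using cl2 h P2 by blast
    then obtain y2' where y2': "y2' \<in> T2" "\<sigma>2 h (orb ?K2 \<rho>2 y2) = orb ?K2 \<rho>2 y2'" by blast
    have e1: "\<sigma> h (orb G \<rho> p) = orb G \<rho> (lift1 y1')"
    proof -
      have "\<sigma> h (orb G \<rho> p) = \<sigma> h (\<iota>1 (orb ?K1 \<rho>1 y1))" using \<iota>1_lift y1 by simp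
      also have "\<dots> = \<iota>1 (\<sigma>1 h (orb ?K1 \<rho>1 y1))" using \<iota>1_H h y1(1) by (metis imageI)
      also have "\<dots> = orb G \<rho> (lift1 y1')" using y1' \<iota>1_lift by simp
      finally show ?thesis .
    qed
    have e2: "\<sigma> h (orb G \<rho> p) = orb G \<rho> (lift2 y2')"
    proof -
      have "\<sigma> h (orb G \<rho> p) = \<sigma> h (\<iota>2 (orb ?K2 \<rho>2 y2))" using \<iota>2_lift y2 by simp
      also have "\<dots> = \<iota>2 (\<sigma>2 h (orb ?K2 \<rho>2 y2))" using \<iota>2_H h y2(1) by (metis imageI)
      also have "\<dots> = orb G \<rho> (lift2 y2')" using y2' \<iota>2_lift by simp
      finally show ?thesis .
    qed
    define x where "x = lift1 y1'"
    have xT: "x \<in> T" using S1T y1' unfolding x_def by blast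
    have "x \<in> orb G \<rho> x" unfolding orb_def
      using W.act1[OF xT] monoid.one_closed[OF group.is_monoid[OF grp]] by force
    hence "x \<in> orb G \<rho> (lift2 y2')" using e1 e2 unfolding x_def by simp
    then obtain g where g: "g \<in> carrier G" "x = \<rho> g (lift2 y2')" unfolding orb_def by blast+
    obtain k where k: "k \<in> carrier G" "x = \<rho> k p"
      using W.main[of x "lift2 y2'" g] g y2' y1' unfolding x_def by blast
    have "orb G \<rho> x = orb G \<rho> p" using orb_shift[OF act grp k(1) W.pT] k(2) by simp
    thus "\<sigma> h (orb G \<rho> p) = orb G \<rho> p" using e1 unfolding x_def by simp
  qed
qed

end
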